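(* Let $q$ be a prime power, let $\epsilon>0$, let $p\ge 2$ be an integer, and let $m\le n$ be positive integers. Let $Z$ be a random vector in $\mathbb{F}_q^n$ with distribution $P_Z$. Let $\mathcal{C}$ be drawn uniformly at random from the set $\mathscr{C}$ of all $[n,n-m]_q$ linear codes, and let $H=H_{\mathcal{C}}$ be a parity-check matrix of $\mathcal{C}$ (an $m\times n$ matrix over $\mathbb{F}_q$ of rank $m$ whose kernel is $\mathcal{C}$), chosen independently of $Z$ given $\mathcal{C}$. If $m\le H_p(Z)-p-\log_q(1/\epsilon)$, then $$\mathbb{E}_{\mathcal{C}\sim\mathscr{C}}\big[\Delta^{(m)}_p(P_{HZ})\big]\le\epsilon,$$ where $P_{HZ}$ is the distribution on $\mathbb{F}_q^m$ of $HZ$ for the fixed code $\mathcal{C}$.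
   Context: Rényi entropy (base $q$) of order $p\in(1,\infty)$: $H_p(Z)=\frac{1}{1-p}\log_q\sum_x P_Z(x)^p$. For $f:\mathbb{F}_q^m\to\mathbb{R}$, the normalized norm is $\|f\|_p=\big(q^{-m}\sum_{x\in\mathbb{F}_q^m}|f(x)|^p\big)^{1/p}$, and the $l_p$-smoothness of a distribution $P$ on $\mathbb{F}_q^m$ is $\Delta^{(m)}_p(P):=\|q^mP\|_p-1$. An $[n,k]_q$ linear code is a $k$-dimensional subspace of $\mathbb{F}_q^n$. *)

theory Defs
  imports "HOL-Analysis.Analysis" "HOL-Probability.Probability"
begin

definition renyi_entropy :: "real \<Rightarrow> real \<Rightarrow> 'b::finite pmf \<Rightarrow> real" where
  "renyi_entropy q p P = (1 / (1 - p)) * log q (\<Sum>x\<in>UNIV. (pmf P x) powr p)"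

text \<open>Normalized l_p norm on functions from a finite type with q^m elements:
  (q^{-m} sum |f x|^p)^(1/p), where q^m = CARD('b).\<close>
definition norm_p :: "real \<Rightarrow> ('b::finite \<Rightarrow> real) \<Rightarrow> real" where
  "norm_p p f = ((1 / real CARD('b)) * (\<Sum>x\<in>UNIV. \<bar>f x\<bar> powr p)) powr (1 / p)"

definition lp_smoothness :: "real \<Rightarrow> 'b::finite pmf \<Rightarrow> real" where
  "lp_smoothness p P = norm_p p (\<lambda>x. real CARD('b) * pmf P x) - 1"

definition linear_codes :: "nat \<Rightarrow> ('a::field ^ 'n) set set" where
  "linear_codes k = {C. vec.subspace C \<and> vec.dim C = k}"

definition parity_check :: "'a::field ^ 'n ^ 'm \<Rightarrow> ('a ^ 'n) set \<Rightarrow> bool" where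
  "parity_check H C \<longleftrightarrow> rank H = CARD('m) \<and> {x. H *v x = 0} = C"

end

theory Submission
  imports Defs
begin

lemma card_subspace_vec:
  fixes S :: "('a::{finite,field}^'n) set"
  assumes "vec.subspace S"
  shows "card S = CARD('a) ^ vec.dim S"
proof -
  obtain B where B: "B \<subseteq> S" "vec.independent B" "S \<subseteq> vec.span B" "card B = vec.dim S"
    using vec.basis_exists[of S] by blast
  have fB: "finite B" using B(2) vec.finiteI_independent by blast
  have spanB: "vec.span B = S" using vec.span_subspace[OF B(1,3) assms] .
  define L where "L = (\<lambda>u. \<Sum>v\<in>B. u v *s v)"
  have "S = L ` (PiE B (\<lambda>_. UNIV))"
  proof
    show "S \<subseteq> L ` (PiE B (\<lambda>_. UNIV))"
    proof
      fix x assume "x \<in> S"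
      then obtain u where u: "x = (\<Sum>v\<in>B. u v *s v)"
        using vec.span_finite[OF fB] spanB by auto
      have "x = L (restrict u B)" unfolding L_def u by (rule sum.cong) auto
      then show "x \<in> L ` (PiE B (\<lambda>_. UNIV))" by auto
    qed
  next
    show "L ` (PiE B (\<lambda>_. UNIV)) \<subseteq> S"
      using vec.span_finite[OF fB] spanB unfolding L_def by auto
  qed
  moreover have "inj_on L (PiE B (\<lambda>_. UNIV))"
  proof (rule inj_onI)
    fix u w assume u: "u \<in> PiE B (\<lambda>_. UNIV)" and w: "w \<in> PiE B (\<lambda>_. UNIV)" and e: "L u = L w"
    have "(\<Sum>v\<in>B. (u v - w v) *s v) = 0"
      proof -
      have "(\<Sum>v\<in>B. (u v - w v) *s v) = (\<Sum>v\<in>B. u v *s v - w v *s v)"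
        by (rule sum.cong) (auto simp: vec.scale_left_diff_distrib)
      also have "\<dots> = L u - L w" unfolding L_def by (rule sum_subtractf)
      finally show ?thesis using e by simp
    qed
    moreover have "\<not> (\<exists>c. (\<exists>v\<in>B. c v \<noteq> 0) \<and> (\<Sum>v\<in>B. c v *s v) = 0)"
      using B(2) vec.dependent_finite[OF fB] by simp
    ultimately have "\<forall>v\<in>B. u v - w v = 0"
      by (auto dest: spec[of _ "\<lambda>v. u v - w v"])
    then show "u = w" using u w by (auto simp: PiE_def extensional_def fun_eq_iff)
  qed
  ultimately have "card S = card (PiE B (\<lambda>_. (UNIV::'a set)))" by (simp add: card_image)
  also have "\<dots> = CARD('a) ^ card B" using fB by (simp add: card_PiE)
  finally show ?thesis using B(4) by simp
qed

lemma codes_sym: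
  fixes B :: "('a::{finite,field}^'n) set" and v v' :: "'a^'n"
  assumes ind: "vec.independent B" and v: "v \<notin> vec.span B" and v': "v' \<notin> vec.span B"
  shows "card {C\<in>linear_codes k. B \<subseteq> C \<and> v \<in> C} \<le> card {C\<in>linear_codes k. B \<subseteq> C \<and> v' \<in> C}"
proof -
  define f where "f = (\<lambda>x. if x = v then v' else x)"
  have vB: "v \<notin> B" "v' \<notin> B" using v v' vec.span_superset by blast+
  have i1: "vec.independent (insert v B)" using vec.independent_insertI[OF v ind] .
  have i2: "vec.independent (insert v' B)" using vec.independent_insertI[OF v' ind] .
  have fi: "f ` insert v B = insert v' B" using vB unfolding f_def by auto
  have inj: "inj_on f (insert v B)" using vB unfolding f_def by (auto simp: inj_on_def)
  obtain g where g: "Vector_Spaces.linear (*s) (*s) g" "inj g" "\<forall>x\<in>insert v B. g x = f x"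
    using vec.linear_independent_extend_inj[OF i1 _ inj] i2 fi by metis
  interpret g: Vector_Spaces.linear "(*s)" "(*s)" g by fact
  have "(\<lambda>C. g ` C) ` {C\<in>linear_codes k. B \<subseteq> C \<and> v \<in> C} \<subseteq> {C\<in>linear_codes k. B \<subseteq> C \<and> v' \<in> C}"
  proof safe
    fix C assume C: "C \<in> linear_codes k" "B \<subseteq> C" "v \<in> C"
    have sC: "vec.subspace C" "vec.dim C = k" using C(1) by (auto simp: linear_codes_def)
    have "vec.subspace (g ` C)" using g.subspace_image[OF sC(1)] .
    moreover have "vec.dim (g ` C) = k"
      using vec.dim_image_eq[OF g(1), of C] g(2) sC(2) by (auto simp: inj_on_def inj_def)
    ultimately show "g ` C \<in> linear_codes k" by (simp add: linear_codes_def)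
    show "v' \<in> g ` C" using g(3) C(3) unfolding f_def by force
    fix x assume "x \<in> B"
    then show "x \<in> g ` C" using g(3) C(2) vB unfolding f_def by force
  qed
  moreover have "inj_on (\<lambda>C. g ` C) {C\<in>linear_codes k. B \<subseteq> C \<and> v \<in> C}"
    using g(2) by (auto simp: inj_on_def inj_image_eq_iff)
  ultimately show ?thesis
    by (metis (no_types, lifting) card_inj_on_le finite)
qed

lemma card_filter_sum: "finite A \<Longrightarrow> card {x\<in>A. P x} = (\<Sum>x\<in>A. if P x then 1 else (0::nat))"
  by (simp add: sum.If_cases Int_def)

lemma card_field_ge2: "CARD('a::{finite,field}) \<ge> 2"
proof -
  have "card {0::'a, 1} \<le> CARD('a)" by (rule card_mono) auto
  then show ?thesis by simp
qed

lemma codes_step: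
  fixes B :: "('a::{finite,field}^'n) set" and v :: "'a^'n"
  assumes ind: "vec.independent B" and v: "v \<notin> vec.span B" and kn: "k \<le> CARD('n)"
  shows "card {C\<in>linear_codes k. insert v B \<subseteq> C} * CARD('a) ^ (CARD('n) - k)
         \<le> card {C\<in>linear_codes k. B \<subseteq> C}"
proof -
  define q where "q = CARD('a)"
  define U where "U = vec.span B"
  define A where "A = {C\<in>linear_codes k. B \<subseteq> C}"
  define X where "X = card {C\<in>linear_codes k. B \<subseteq> C \<and> v \<in> C}"
  have q2: "q \<ge> 2" unfolding q_def using card_field_ge2 .
  have fB: "finite B" using ind vec.finiteI_independent by blast
  have cardU: "card U = q ^ card B"
    unfolding U_def q_def using card_subspace_vec[of "vec.span B"] vec.dim_span_eq_card_independent[OF ind]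
    by (simp add: vec.subspace_span)
  have eqX: "{C\<in>linear_codes k. insert v B \<subseteq> C} = {C\<in>linear_codes k. B \<subseteq> C \<and> v \<in> C}" by auto
  have finC: "finite (linear_codes k :: ('a^'n) set set)" by simp
  have sym: "card {C\<in>A. w \<in> C} = X" if "w \<notin> U" for w
  proof -
    have "{C\<in>A. w \<in> C} = {C\<in>linear_codes k. B \<subseteq> C \<and> w \<in> C}" unfolding A_def by auto
    then show ?thesis unfolding X_def using codes_sym[OF ind v, of w k] codes_sym[OF ind _ v, of w k] that
      unfolding U_def by simp
  qed
  have "(\<Sum>w\<in>-U. card {C\<in>A. w \<in> C}) = (\<Sum>w\<in>-U. \<Sum>C\<in>A. if w \<in> C then 1 else (0::nat))"
    by (rule sum.cong) (simp_all add: card_filter_sum)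
  also have "\<dots> = (\<Sum>C\<in>A. \<Sum>w\<in>-U. if w \<in> C then 1 else (0::nat))" by (rule sum.swap)
  also have "\<dots> = (\<Sum>C\<in>A. q ^ k - q ^ card B)"
  proof (rule sum.cong)
    fix C assume "C \<in> A"
    then have C: "vec.subspace C" "vec.dim C = k" "B \<subseteq> C" by (auto simp: A_def linear_codes_def)
    have UC: "U \<subseteq> C" unfolding U_def using vec.span_minimal[OF C(3,1)] .
    have "(\<Sum>w\<in>-U. if w \<in> C then 1 else (0::nat)) = card {w\<in>-U. w \<in> C}"
      by (rule card_filter_sum[symmetric]) simp
    also have "{w\<in>-U. w \<in> C} = C - U" by auto
    also have "card (C - U) = card C - card U" using UC by (simp add: card_Diff_subset)
    finally show "(\<Sum>w\<in>-U. if w \<in> C then 1 else (0::nat)) = q ^ k - q ^ card B"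
      using card_subspace_vec[OF C(1)] C(2) cardU q_def by simp
  qed simp
  finally have dc: "card (-U) * X = card A * (q ^ k - q ^ card B)"
    using sym by simp
  have cU: "card (-U) = q ^ CARD('n) - q ^ card B"
  proof -
    have "-U = UNIV - U" by auto
    then have "card (-U) = card (UNIV::('a^'n) set) - card U" by (simp add: card_Diff_subset)
    then show ?thesis using cardU by (simp add: q_def)
  qed
  show ?thesis
  proof (cases "card B < k")
    case False
    have "X = 0" unfolding X_def
    proof -
      have "{C\<in>linear_codes k. B \<subseteq> C \<and> v \<in> C} = {}"
      proof safe
        fix C assume C: "C \<in> linear_codes k" "B \<subseteq> C" "v \<in> C"
        have "card (insert v B) \<le> vec.dim C"
          using vec.independent_card_le_dim[of "insert v B" C] vec.independent_insertI[OF v ind] C by auto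
        moreover have "v \<notin> B" using v vec.span_superset by blast
        ultimately show "C \<in> {}" using C False fB by (auto simp: linear_codes_def)
      qed
      then show "card {C\<in>linear_codes k. B \<subseteq> C \<and> v \<in> C} = 0" by simp
    qed
    then have "card {C\<in>linear_codes k. insert v B \<subseteq> C} = 0" using eqX unfolding X_def by simp
    then show ?thesis by (simp only: mult_0 le0)
  next
    case True
    define r where "r = q ^ (CARD('n) - k)"
    have rK: "r * q ^ k = q ^ CARD('n)" unfolding r_def using kn by (simp flip: power_add)
    have ra: "q ^ card B \<le> r * q ^ card B" unfolding r_def using q2 by simp
    have Ka: "q ^ card B < q ^ k" using True q2 by (simp add: power_strict_increasing)
    have "X * r * (q ^ k - q ^ card B) = X * (r * q ^ k - r * q ^ card B)"
      by (simp add: diff_mult_distrib2 mult.assoc)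
    also have "\<dots> \<le> X * (q ^ CARD('n) - q ^ card B)" using rK ra by (simp add: diff_le_mono2)
    also have "\<dots> = card A * (q ^ k - q ^ card B)" using dc cU by (simp add: mult.commute)
    finally have "X * r \<le> card A" using Ka by simp
    then show ?thesis using eqX by (simp add: X_def r_def q_def A_def)
  qed
qed

lemma codes_indep:
  fixes B :: "('a::{finite,field}^'n) set"
  assumes ind: "vec.independent B" and kn: "k \<le> CARD('n)"
  shows "card {C\<in>linear_codes k. B \<subseteq> C} * CARD('a) ^ ((CARD('n) - k) * card B)
         \<le> card (linear_codes k :: ('a^'n) set set)"
proof -
  have fB: "finite B" using ind vec.finiteI_independent by blast
  from fB ind show ?thesis
  proof (induction B rule: finite_induct)
    case empty
    then show ?case by simp
  next
    case (insert v B)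
    have indB: "vec.independent B" using insert.prems vec.independent_mono by blast
    have v: "v \<notin> vec.span B" using insert.prems insert.hyps(2) vec.independent_insert[of v B] by simp
    have e: "(CARD('n) - k) * card (insert v B) = (CARD('n) - k) + (CARD('n) - k) * card B"
      using insert.hyps by simp
    have "card {C\<in>linear_codes k. insert v B \<subseteq> C} * CARD('a) ^ ((CARD('n) - k) * card (insert v B))
      = (card {C\<in>linear_codes k. insert v B \<subseteq> C} * CARD('a) ^ (CARD('n) - k)) * CARD('a) ^ ((CARD('n) - k) * card B)"
      unfolding e power_add by (simp add: mult.assoc)
    also have "\<dots> \<le> card {C\<in>linear_codes k. B \<subseteq> C} * CARD('a) ^ ((CARD('n) - k) * card B)"
      using codes_step[OF indB v kn] by simp
    also have "\<dots> \<le> card (linear_codes k :: ('a^'n) set set)" using insert.IH[OF indB] .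
    finally show ?case .
  qed
qed



lemma tangent_pow:
  fixes t c :: real
  assumes "c > 0" "t \<ge> 0"
  shows "c ^ j + real j * c ^ (j - 1) * (t - c) \<le> t ^ j"
proof -
  have "1 + real j * (t / c - 1) \<le> (1 + (t / c - 1)) ^ j"
    by (rule Bernoulli_inequality) (use assms in simp)
  then have "1 + real j * (t / c - 1) \<le> (t / c) ^ j" by simp
  then have "c ^ j * (1 + real j * (t / c - 1)) \<le> c ^ j * (t / c) ^ j"
    using assms by (intro mult_left_mono) auto
  moreover have "c ^ j * (t / c) ^ j = t ^ j" using assms by (simp add: power_divide)
  moreover have "c ^ j * (1 + real j * (t / c - 1)) = c ^ j + real j * c ^ (j - 1) * (t - c)"
  proof (cases j)
    case 0 then show ?thesis by simp
  next
    case (Suc i)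
    have cc: "c * (t / c - 1) = t - c" using assms by (simp add: field_simps)
    have "c ^ j * (t / c - 1) = c ^ i * (c * (t / c - 1))" using Suc by (metis mult.assoc mult.commute power_Suc)
    then have "c ^ j * (t / c - 1) = c ^ i * (t - c)" using cc by (simp only:)
    moreover have "c ^ j * (1 + real j * (t / c - 1)) = c ^ j + real j * (c ^ j * (t / c - 1))"
      by (simp add: algebra_simps)
    ultimately show ?thesis using Suc by simp
  qed
  ultimately show ?thesis by simp
qed

lemma young_pow:
  fixes a b :: real
  assumes "a \<ge> 0" "b \<ge> 0"
  shows "a * b ^ j \<le> (a ^ (j+1) + real j * b ^ (j+1)) / (real j + 1)"
proof (cases "b = 0")
  case True
  then show ?thesis using assms by (cases j) auto
next
  case False
  then have b: "b > 0" using assms by simp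
  have "b ^ (j+1) + real (j+1) * b ^ j * (a - b) \<le> a ^ (j+1)"
    using tangent_pow[OF b assms(1), of "j+1"] by simp
  then show ?thesis by (simp add: field_simps power_add)
qed

lemma power_mean_sum:
  fixes w :: "'i \<Rightarrow> real"
  assumes fin: "finite A" and ne: "A \<noteq> {}" and nn: "\<And>x. x \<in> A \<Longrightarrow> w x \<ge> 0" and j: "j \<ge> 1"
  shows "(\<Sum>x\<in>A. w x) ^ j \<le> real (card A) ^ (j - 1) * (\<Sum>x\<in>A. w x ^ j)"
proof -
  define S where "S = (\<Sum>x\<in>A. w x)"
  define N where "N = real (card A)"
  have N: "N > 0" using fin ne by (simp add: N_def card_gt_0_iff)
  show ?thesis
  proof (cases "S = 0")
    case True
    have "0 \<le> real (card A) ^ (j - 1) * (\<Sum>x\<in>A. w x ^ j)"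
      using nn by (intro mult_nonneg_nonneg sum_nonneg) auto
    moreover have "(\<Sum>x\<in>A. w x) ^ j = 0" using True j by (simp add: S_def)
    ultimately show ?thesis by linarith
  next
    case False
    then have S: "S > 0" using nn S_def sum_nonneg by (metis order_le_less)
    define c where "c = S / N"
    have c: "c > 0" using S N by (simp add: c_def)
    have "(\<Sum>x\<in>A. c ^ j + real j * c ^ (j - 1) * (w x - c)) \<le> (\<Sum>x\<in>A. w x ^ j)"
      by (rule sum_mono) (use tangent_pow[OF c] nn in auto)
    moreover have "(\<Sum>x\<in>A. c ^ j + real j * c ^ (j - 1) * (w x - c)) = N * c ^ j"
    proof -
      have "(\<Sum>x\<in>A. c ^ j + real j * c ^ (j - 1) * (w x - c))
          = N * c ^ j + real j * c ^ (j - 1) * (S - N * c)"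
        by (simp add: sum.distrib sum_distrib_left[symmetric] sum_subtractf S_def N_def)
      also have "S - N * c = 0" using N by (simp add: c_def)
      finally show ?thesis by simp
    qed
    ultimately have "N * c ^ j \<le> (\<Sum>x\<in>A. w x ^ j)" by simp
    then have "N ^ (j - 1) * (N * c ^ j) \<le> N ^ (j - 1) * (\<Sum>x\<in>A. w x ^ j)"
      using N by (intro mult_left_mono) auto
    moreover have "N ^ (j - 1) * (N * c ^ j) = S ^ j"
    proof -
      have "N ^ (j - 1) * N = N ^ j" using j by (simp add: power_Suc2[symmetric])
      then have "N ^ (j - 1) * (N * c ^ j) = N ^ j * c ^ j" by (simp add: mult.assoc[symmetric])
      also have "\<dots> = S ^ j" using N by (simp add: c_def power_divide)
      finally show ?thesis .
    qed
    ultimately show ?thesis by (simp add: S_def N_def)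
  qed
qed

lemma interp_pow:
  fixes f :: "'i \<Rightarrow> real"
  assumes fin: "finite A" and nn: "\<And>x. x \<in> A \<Longrightarrow> f x \<ge> 0" and s1: "(\<Sum>x\<in>A. f x) = 1"
    and r: "1 \<le> r" "r \<le> p"
  shows "(\<Sum>x\<in>A. f x ^ r) \<le> (\<Sum>x\<in>A. f x ^ p) powr ((real r - 1) / (real p - 1))"
proof (cases "r = p")
  case True
  have p0: "p > 0" using r by simp
  have "(\<Sum>x\<in>A. f x ^ p) \<ge> 0" using nn by (simp add: sum_nonneg)
  moreover have "(\<Sum>x\<in>A. f x ^ p) \<noteq> 0"
  proof
    assume z: "(\<Sum>x\<in>A. f x ^ p) = 0"
    then have "\<forall>x\<in>A. f x ^ p = 0" using sum_nonneg_eq_0_iff[OF fin, of "\<lambda>x. f x ^ p"] nn by simp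
    then have "\<forall>x\<in>A. f x = 0" using p0 by simp
    then show False using s1 by simp
  qed
  ultimately show ?thesis using True r s1 by simp
next
  case False
  then have rp: "r < p" using r by simp
  have p0: "p > 0" using r by simp
  define M where "M = (\<Sum>x\<in>A. f x ^ p)"
  have M: "M > 0"
  proof -
    have "M \<ge> 0" using nn by (simp add: M_def sum_nonneg)
    moreover have "M \<noteq> 0"
    proof
      assume z: "M = 0"
      then have "\<forall>x\<in>A. f x ^ p = 0" using sum_nonneg_eq_0_iff[OF fin, of "\<lambda>x. f x ^ p"] nn by (simp add: M_def)
      then have "\<forall>x\<in>A. f x = 0" using p0 by simp
      then show False using s1 by simp
    qed
    ultimately show ?thesis by simp
  qed
  define \<alpha> where "\<alpha> = (real r - 1) / (real p - 1)"
  have \<alpha>: "0 \<le> \<alpha>" "\<alpha> \<le> 1" using r rp by (auto simp: \<alpha>_def field_simps)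
  have key: "f x ^ r / M powr \<alpha> \<le> f x * (\<alpha> * (f x ^ (p - 1) / M) + (1 - \<alpha>))" if x: "x \<in> A" for x
  proof (cases "f x = 0")
    case True then show ?thesis using r by (simp add: power_0_left)
  next
    case False
    then have fx: "f x > 0" using nn[OF x] False by (simp add: less_le)
    have "(f x ^ (p - 1) / M) powr \<alpha> * 1 powr (1 - \<alpha>) \<le> \<alpha> * (f x ^ (p - 1) / M) + (1 - \<alpha>) * 1"
      by (rule Youngs_inequality_0) (use \<alpha> fx M in auto)
    moreover have "(f x ^ (p - 1) / M) powr \<alpha> = f x ^ (r - 1) / M powr \<alpha>"
    proof -
      have e1: "f x ^ (p - 1) = f x powr (real p - 1)"
        using powr_realpow[OF fx, of "p-1"] rp by (simp add: of_nat_diff)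
      have e2: "f x ^ (r - 1) = f x powr (real r - 1)"
        using powr_realpow[OF fx, of "r-1"] r by (simp add: of_nat_diff)
      have e3: "(f x powr (real p - 1)) powr \<alpha> = f x powr (real r - 1)"
        using r rp by (simp add: powr_powr \<alpha>_def)
      have "(f x ^ (p - 1) / M) powr \<alpha> = (f x ^ (p - 1)) powr \<alpha> / M powr \<alpha>"
        using fx M by (simp add: powr_divide)
      then show ?thesis using e1 e2 e3 by simp
    qed
    ultimately have "f x ^ (r - 1) / M powr \<alpha> \<le> \<alpha> * (f x ^ (p - 1) / M) + (1 - \<alpha>)" by simp
    then have "f x * (f x ^ (r - 1) / M powr \<alpha>) \<le> f x * (\<alpha> * (f x ^ (p - 1) / M) + (1 - \<alpha>))"
      using fx by (intro mult_left_mono) auto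
    moreover have "f x * (f x ^ (r - 1) / M powr \<alpha>) = f x ^ r / M powr \<alpha>"
    proof -
      have "f x * f x ^ (r - 1) = f x ^ r" using r by (cases r) auto
      then show ?thesis by (simp only: times_divide_eq_right)
    qed
    ultimately show ?thesis by metis
  qed
  have "(\<Sum>x\<in>A. f x ^ r) / M powr \<alpha> = (\<Sum>x\<in>A. f x ^ r / M powr \<alpha>)" by (simp add: sum_divide_distrib)
  also have "\<dots> \<le> (\<Sum>x\<in>A. f x * (\<alpha> * (f x ^ (p - 1) / M) + (1 - \<alpha>)))" by (rule sum_mono) (rule key)
  also have "\<dots> = (\<Sum>x\<in>A. \<alpha> / M * (f x * f x ^ (p - 1)) + (1 - \<alpha>) * f x)"
    by (rule sum.cong) (simp_all add: algebra_simps)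
  also have "\<dots> = \<alpha> / M * (\<Sum>x\<in>A. f x * f x ^ (p - 1)) + (1 - \<alpha>) * (\<Sum>x\<in>A. f x)"
    by (simp only: sum.distrib sum_distrib_left)
  also have "(\<Sum>x\<in>A. f x * f x ^ (p - 1)) = M"
    unfolding M_def using r rp by (intro sum.cong) (auto simp: power_eq_if)
  finally have "(\<Sum>x\<in>A. f x ^ r) / M powr \<alpha> \<le> 1" using M s1 by simp
  then show ?thesis using M by (simp add: M_def \<alpha>_def divide_le_eq)
qed



definition comb :: "(nat \<Rightarrow> 'a::field) \<Rightarrow> nat set \<Rightarrow> (nat \<Rightarrow> 'a^'n) \<Rightarrow> 'a^'n" where
  "comb a J y = y 0 + (\<Sum>t\<in>J. a t *s (y t - y 0))"

lemma comb_upd: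
  assumes "finite J" "t \<in> J" "t \<noteq> 0"
  shows "comb a J (y(t:=u)) = comb a J (y(t:=0)) + a t *s u"
proof -
  define S where "S = (\<Sum>s\<in>J-{t}. a s *s (y s - y 0))"
  have e1: "comb a J (y(t:=u)) = y 0 + (a t *s (u - y 0) + S)"
    unfolding comb_def S_def using assms by (simp add: sum.remove[OF assms(1,2)])
  have e2: "comb a J (y(t:=0)) = y 0 + (a t *s (0 - y 0) + S)"
    unfolding comb_def S_def using assms by (simp add: sum.remove[OF assms(1,2)])
  show ?thesis unfolding e1 e2 by (simp add: vector_ssub_ldistrib algebra_simps)
qed

lemma sum_PiE_prod_single:
  fixes P :: "'v::finite \<Rightarrow> real" and S :: "'i set"
  assumes "finite S" "t \<in> S" "\<forall>z. P z \<ge> 0" "(\<Sum>z\<in>UNIV. P z) = 1"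
  shows "(\<Sum>y\<in>PiE S (\<lambda>_. UNIV::'v set). (\<Prod>s\<in>S-{t}. P (y s)) * P (y t) ^ r) = (\<Sum>z\<in>UNIV. P z ^ r)"
proof -
  define g where "g = (\<lambda>s (u::'v). if s = t then P u ^ r else P u)"
  have "(\<Sum>y\<in>PiE S (\<lambda>_. UNIV). (\<Prod>s\<in>S-{t}. P (y s)) * P (y t) ^ r)
      = (\<Sum>y\<in>PiE S (\<lambda>_. UNIV). \<Prod>s\<in>S. g s (y s))"
  proof (rule sum.cong)
    fix y :: "'i \<Rightarrow> 'v" assume "y \<in> PiE S (\<lambda>_. UNIV)"
    have "(\<Prod>s\<in>S. g s (y s)) = g t (y t) * (\<Prod>s\<in>S-{t}. g s (y s))"
      using assms by (simp add: prod.remove)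
    also have "(\<Prod>s\<in>S-{t}. g s (y s)) = (\<Prod>s\<in>S-{t}. P (y s))"
      by (rule prod.cong) (auto simp: g_def)
    finally show "(\<Prod>s\<in>S-{t}. P (y s)) * P (y t) ^ r = (\<Prod>s\<in>S. g s (y s))"
      by (simp add: g_def)
  qed simp
  also have "\<dots> = (\<Prod>s\<in>S. \<Sum>u\<in>UNIV. g s u)"
    using prod_sum_PiE[of S "\<lambda>_. UNIV" g] assms by simp
  also have "\<dots> = (\<Sum>u\<in>UNIV. g t u) * (\<Prod>s\<in>S-{t}. \<Sum>u\<in>UNIV. g s u)"
    using assms by (simp add: prod.remove)
  also have "(\<Prod>s\<in>S-{t}. \<Sum>u\<in>UNIV. g s u) = 1"
    using assms by (intro prod.neutral) (auto simp: g_def)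
  finally show ?thesis by (simp add: g_def)
qed

lemma PiE_UNIV_upd: "y \<in> PiE S (\<lambda>_. UNIV) \<Longrightarrow> t \<in> S \<Longrightarrow> y(t := v) \<in> PiE S (\<lambda>_. UNIV)"
  by (auto simp: PiE_def extensional_def)

lemma core_bound:
  fixes P :: "('a::{finite,field}^'n) \<Rightarrow> real"
  assumes fJ: "finite J" and J0: "0 \<notin> J" and nn: "\<forall>z. P z \<ge> 0" and s1: "(\<Sum>z\<in>UNIV. P z) = 1"
  shows "(\<Sum>y\<in>PiE (insert 0 J) (\<lambda>_. UNIV). (\<Prod>s\<in>insert 0 J. P (y s)) * P (comb a J y) ^ j)
         \<le> (\<Sum>z\<in>UNIV. P z ^ (j+1))"
proof (cases "\<forall>t\<in>J. a t = 0")
  case True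
  have "(\<Sum>y\<in>PiE (insert 0 J) (\<lambda>_. UNIV). (\<Prod>s\<in>insert 0 J. P (y s)) * P (comb a J y) ^ j)
      = (\<Sum>y\<in>PiE (insert 0 J) (\<lambda>_. UNIV). (\<Prod>s\<in>insert 0 J - {0}. P (y s)) * P (y 0) ^ (j+1))"
  proof (rule sum.cong)
    fix y :: "nat \<Rightarrow> 'a^'n"
    have "comb a J y = y 0" unfolding comb_def using True by simp
    moreover have "(\<Prod>s\<in>insert 0 J. P (y s)) = P (y 0) * (\<Prod>s\<in>insert 0 J - {0}. P (y s))"
      using fJ J0 by simp
    ultimately show "(\<Prod>s\<in>insert 0 J. P (y s)) * P (comb a J y) ^ j
        = (\<Prod>s\<in>insert 0 J - {0}. P (y s)) * P (y 0) ^ (j+1)" by (simp add: algebra_simps)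
  qed simp
  also have "\<dots> = (\<Sum>z\<in>UNIV. P z ^ (j+1))"
    by (rule sum_PiE_prod_single) (use fJ nn s1 in auto)
  finally show ?thesis by simp
next
  case False
  then obtain t where t: "t \<in> J" "a t \<noteq> 0" by blast
  have t0: "t \<noteq> 0" using t J0 by metis
  define J1 where "J1 = insert 0 J"
  define Y where "Y = PiE J1 (\<lambda>_. UNIV::('a^'n) set)"
  have fJ1: "finite J1" "t \<in> J1" using fJ t by (auto simp: J1_def)
  define \<rho> where "\<rho> = (\<lambda>y::nat \<Rightarrow> 'a^'n. comb a J (y(t := 0)))"
  define \<sigma> where "\<sigma> = (\<lambda>y::nat \<Rightarrow> 'a^'n. y(t := comb a J y))"
  define \<tau> where "\<tau> = (\<lambda>y::nat \<Rightarrow> 'a^'n. y(t := inverse (a t) *s (y t - \<rho> y)))"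
  have \<rho>upd: "\<rho> (y(t := u)) = \<rho> y" for y u unfolding \<rho>_def by simp
  have combeq: "comb a J y = \<rho> y + a t *s y t" for y
    using comb_upd[OF fJ t(1) t0, of a y "y t"] unfolding \<rho>_def by simp
  have bij: "bij_betw \<sigma> Y Y"
  proof (rule bij_betw_byWitness[where f'=\<tau>])
    show "\<forall>y\<in>Y. \<tau> (\<sigma> y) = y"
    proof
      fix y
      have "\<sigma> y t - \<rho> (\<sigma> y) = a t *s y t" unfolding \<sigma>_def using combeq[of y] \<rho>upd by simp
      then show "\<tau> (\<sigma> y) = y" unfolding \<tau>_def using t(2)
        by (simp add: \<sigma>_def vec.scale_scale)
    qed
    show "\<forall>y\<in>Y. \<sigma> (\<tau> y) = y"
    proof
      fix y
      have "comb a J (\<tau> y) = y t"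
        using combeq[of "\<tau> y"] \<rho>upd t(2) unfolding \<tau>_def by (simp add: vec.scale_scale)
      then show "\<sigma> (\<tau> y) = y" unfolding \<sigma>_def by (simp add: \<tau>_def)
    qed
    show "\<sigma> ` Y \<subseteq> Y" unfolding \<sigma>_def Y_def using fJ1 by (auto intro: PiE_UNIV_upd)
    show "\<tau> ` Y \<subseteq> Y" unfolding \<tau>_def Y_def using fJ1 by (auto intro: PiE_UNIV_upd)
  qed
  define G where "G = (\<lambda>y::nat \<Rightarrow> 'a^'n. (\<Prod>s\<in>J1-{t}. P (y s)) * P (y t) ^ (j+1))"
  have sum1: "(\<Sum>y\<in>Y. G y) = (\<Sum>z\<in>UNIV. P z ^ (j+1))"
    unfolding G_def Y_def by (rule sum_PiE_prod_single) (use fJ1 nn s1 in auto)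
  have sum2: "(\<Sum>y\<in>Y. (\<Prod>s\<in>J1-{t}. P (y s)) * P (comb a J y) ^ (j+1)) = (\<Sum>z\<in>UNIV. P z ^ (j+1))"
  proof -
    have "(\<Sum>y\<in>Y. (\<Prod>s\<in>J1-{t}. P (y s)) * P (comb a J y) ^ (j+1)) = (\<Sum>y\<in>Y. G (\<sigma> y))"
    proof (rule sum.cong)
      fix y
      have "(\<Prod>s\<in>J1-{t}. P (\<sigma> y s)) = (\<Prod>s\<in>J1-{t}. P (y s))"
        by (rule prod.cong) (auto simp: \<sigma>_def)
      then show "(\<Prod>s\<in>J1-{t}. P (y s)) * P (comb a J y) ^ (j+1) = G (\<sigma> y)"
        unfolding G_def by (simp add: \<sigma>_def)
    qed simp
    also have "\<dots> = (\<Sum>y\<in>Y. G y)" by (rule sum.reindex_bij_betw[OF bij])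
    finally show ?thesis using sum1 by simp
  qed
  have "(\<Sum>y\<in>Y. (\<Prod>s\<in>J1. P (y s)) * P (comb a J y) ^ j)
      \<le> (\<Sum>y\<in>Y. (\<Prod>s\<in>J1-{t}. P (y s)) * ((P (y t) ^ (j+1) + real j * P (comb a J y) ^ (j+1)) / (real j + 1)))"
  proof (rule sum_mono)
    fix y assume "y \<in> Y"
    have h1: "(\<Prod>s\<in>J1. P (y s)) = (\<Prod>s\<in>J1-{t}. P (y s)) * P (y t)"
      using fJ1 by (simp add: prod.remove mult.commute)
    have h2: "P (y t) * P (comb a J y) ^ j \<le> (P (y t) ^ (j+1) + real j * P (comb a J y) ^ (j+1)) / (real j + 1)"
      using young_pow nn by blast
    have h3: "(\<Prod>s\<in>J1-{t}. P (y s)) \<ge> 0" using nn by (simp add: prod_nonneg)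
    have h: "(\<Prod>s\<in>J1-{t}. P (y s)) * (P (y t) * P (comb a J y) ^ j)
       \<le> (\<Prod>s\<in>J1-{t}. P (y s)) * ((P (y t) ^ (j+1) + real j * P (comb a J y) ^ (j+1)) / (real j + 1))"
      by (rule mult_left_mono[OF h2 h3])
    show "(\<Prod>s\<in>J1. P (y s)) * P (comb a J y) ^ j
      \<le> (\<Prod>s\<in>J1-{t}. P (y s)) * ((P (y t) ^ (j+1) + real j * P (comb a J y) ^ (j+1)) / (real j + 1))"
      using h unfolding h1 by (simp only: mult.assoc)
  qed
  also have "\<dots> = ((\<Sum>y\<in>Y. G y) + real j * (\<Sum>y\<in>Y. (\<Prod>s\<in>J1-{t}. P (y s)) * P (comb a J y) ^ (j+1))) / (real j + 1)"
    unfolding G_def by (simp add: sum_divide_distrib sum.distrib sum_distrib_left algebra_simps add_divide_distrib)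
  also have "\<dots> = (\<Sum>z\<in>UNIV. P z ^ (j+1))" using sum1 sum2 by (simp add: field_simps)
  finally show ?thesis unfolding Y_def J1_def .
qed



lemma SJ_bound:
  fixes P :: "('a::{finite,field}^'n) \<Rightarrow> real" and J K :: "nat set" and p :: nat
  assumes nn: "\<forall>z. P z \<ge> 0" and s1: "(\<Sum>z\<in>UNIV. P z) = 1"
    and J: "J \<subseteq> {1..<p}" and K: "K = {1..<p} - J"
    and R: "(\<Sum>z\<in>UNIV. P z ^ (card K + 1)) \<le> R ^ card K" and p: "p \<ge> 1"
  shows "(\<Sum>x\<in>{x\<in>PiE {..<p} (\<lambda>_. UNIV). \<forall>i\<in>K. \<exists>c. x i - x 0 = (\<Sum>t\<in>J. c t *s (x t - x 0))}.
            \<Prod>i<p. P (x i)) \<le> (real CARD('a) ^ card J * R) ^ card K"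
proof -
  define J1 where "J1 = insert 0 J"
  define Y where "Y = PiE J1 (\<lambda>_. UNIV::('a^'n) set)"
  define A where "A = PiE J (\<lambda>_. UNIV::'a set)"
  define Cs where "Cs = PiE K (\<lambda>_. A)"
  define \<Phi> where "\<Phi> = (\<lambda>(y::nat \<Rightarrow> 'a^'n, c::nat \<Rightarrow> nat \<Rightarrow> 'a). (\<lambda>i. if i \<in> K then comb (c i) J y else y i))"
  define Sx where "Sx = {x\<in>PiE {..<p} (\<lambda>_. UNIV::('a^'n) set). \<forall>i\<in>K. \<exists>c. x i - x 0 = (\<Sum>t\<in>J. c t *s (x t - x 0))}"
  define F where "F = (\<lambda>x::nat \<Rightarrow> 'a^'n. \<Prod>i<p. P (x i))"
  define j where "j = card K"
  have fJ: "finite J" using J finite_subset by blast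
  have fK: "finite K" using K by simp
  have J0: "0 \<notin> J" using J by auto
  have un: "{..<p} = J1 \<union> K" using J K p by (auto simp: J1_def)
  have dis: "J1 \<inter> K = {}" using K by (auto simp: J1_def)
  have fJ1: "finite J1" using fJ by (simp add: J1_def)
  have Fnn: "F x \<ge> 0" for x unfolding F_def using nn by (simp add: prod_nonneg)
  have sub: "Sx \<subseteq> \<Phi> ` (Y \<times> Cs)"
  proof
    fix x assume x: "x \<in> Sx"
    then have xP: "x \<in> PiE {..<p} (\<lambda>_. UNIV)" and xc: "\<forall>i\<in>K. \<exists>c. x i - x 0 = (\<Sum>t\<in>J. c t *s (x t - x 0))"
      by (auto simp: Sx_def)
    define c where "c = (\<lambda>i. restrict (SOME c. x i - x 0 = (\<Sum>t\<in>J. c t *s (x t - x 0))) J)"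
    define y where "y = restrict x J1"
    have yY: "y \<in> Y" unfolding y_def Y_def by simp
    have cC: "restrict c K \<in> Cs" unfolding Cs_def A_def c_def by simp
    have "\<Phi> (y, restrict c K) = x"
    proof
      fix i
      show "\<Phi> (y, restrict c K) i = x i"
      proof (cases "i \<in> K")
        case True
        obtain c0 where c0: "x i - x 0 = (\<Sum>t\<in>J. c0 t *s (x t - x 0))" using xc True by blast
        define ci0 where "ci0 = (SOME c. x i - x 0 = (\<Sum>t\<in>J. c t *s (x t - x 0)))"
        have ci: "x i - x 0 = (\<Sum>t\<in>J. ci0 t *s (x t - x 0))"
          unfolding ci0_def using someI[of "\<lambda>c. x i - x 0 = (\<Sum>t\<in>J. c t *s (x t - x 0))", OF c0] .
        have cieq: "c i = restrict ci0 J" by (simp add: c_def ci0_def)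
        have "comb (c i) J y = x 0 + (\<Sum>t\<in>J. c i t *s (x t - x 0))"
          unfolding comb_def y_def J1_def by (auto intro!: sum.cong)
        also have "(\<Sum>t\<in>J. c i t *s (x t - x 0)) = (\<Sum>t\<in>J. ci0 t *s (x t - x 0))"
          unfolding cieq by (rule sum.cong) auto
        also have "\<dots> = x i - x 0" using ci by simp
        finally show ?thesis using True by (simp add: \<Phi>_def)
      next
        case False
        show ?thesis
        proof (cases "i \<in> J1")
          case True then show ?thesis using False by (simp add: \<Phi>_def y_def)
        next
          case F2: False
          then have "i \<notin> {..<p}" using un False by blast
          then have "x i = undefined" using xP by (auto simp: PiE_def extensional_def)
          then show ?thesis using False F2 by (simp add: \<Phi>_def y_def)
        qed
      qed
    qed
    then show "x \<in> \<Phi> ` (Y \<times> Cs)" using yY cC by force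
  qed
  have finYC: "finite (Y \<times> Cs)" unfolding Y_def Cs_def A_def using fJ1 fK fJ
    by (auto intro!: finite_PiE)
  have "(\<Sum>x\<in>Sx. F x) \<le> (\<Sum>x\<in>\<Phi> ` (Y \<times> Cs). F x)"
    by (rule sum_mono2) (use sub finYC Fnn in auto)
  also have "\<dots> \<le> (\<Sum>yc\<in>Y \<times> Cs. F (\<Phi> yc))"
    using sum_image_le[OF finYC, of F \<Phi>] Fnn by (simp add: o_def)
  also have "\<dots> = (\<Sum>y\<in>Y. \<Sum>c\<in>Cs. (\<Prod>s\<in>J1. P (y s)) * (\<Prod>i\<in>K. P (comb (c i) J y)))"
  proof -
    have "F (\<Phi> (y, c)) = (\<Prod>s\<in>J1. P (y s)) * (\<Prod>i\<in>K. P (comb (c i) J y))" for y c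
    proof -
      have "F (\<Phi> (y, c)) = (\<Prod>i\<in>J1 \<union> K. P (\<Phi> (y, c) i))" unfolding F_def un ..
      also have "\<dots> = (\<Prod>i\<in>J1. P (\<Phi> (y, c) i)) * (\<Prod>i\<in>K. P (\<Phi> (y, c) i))"
        by (rule prod.union_disjoint) (use fJ1 fK dis in auto)
      also have "(\<Prod>i\<in>J1. P (\<Phi> (y, c) i)) = (\<Prod>s\<in>J1. P (y s))"
        by (rule prod.cong) (use dis in \<open>auto simp: \<Phi>_def\<close>)
      also have "(\<Prod>i\<in>K. P (\<Phi> (y, c) i)) = (\<Prod>i\<in>K. P (comb (c i) J y))"
        by (rule prod.cong) (auto simp: \<Phi>_def)
      finally show ?thesis .
    qed
    then have e: "F (\<Phi> yc) = (\<Prod>s\<in>J1. P (fst yc s)) * (\<Prod>i\<in>K. P (comb (snd yc i) J (fst yc)))" for yc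
      by (metis prod.collapse)
    show ?thesis by (simp add: sum.cartesian_product split_beta e)
  qed
  also have "\<dots> = (\<Sum>y\<in>Y. (\<Prod>s\<in>J1. P (y s)) * (\<Sum>a\<in>A. P (comb a J y)) ^ j)"
  proof (rule sum.cong)
    fix y
    have h1: "(\<Sum>c\<in>Cs. \<Prod>i\<in>K. P (comb (c i) J y)) = (\<Prod>i\<in>K. \<Sum>a\<in>A. P (comb a J y))"
      unfolding Cs_def using prod_sum_PiE[of K "\<lambda>_. A" "\<lambda>i a. P (comb a J y)"] fK fJ
      by (simp add: A_def finite_PiE)
    have h2: "(\<Prod>i\<in>K. \<Sum>a\<in>A. P (comb a J y)) = (\<Sum>a\<in>A. P (comb a J y)) ^ j" by (simp add: j_def)
    have "(\<Sum>c\<in>Cs. (\<Prod>s\<in>J1. P (y s)) * (\<Prod>i\<in>K. P (comb (c i) J y)))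
        = (\<Prod>s\<in>J1. P (y s)) * (\<Sum>c\<in>Cs. \<Prod>i\<in>K. P (comb (c i) J y))"
      by (rule sum_distrib_left[symmetric])
    then show "(\<Sum>c\<in>Cs. (\<Prod>s\<in>J1. P (y s)) * (\<Prod>i\<in>K. P (comb (c i) J y)))
        = (\<Prod>s\<in>J1. P (y s)) * (\<Sum>a\<in>A. P (comb a J y)) ^ j"
      by (simp only: h1 h2)
  qed simp
  also have "\<dots> \<le> (real CARD('a) ^ card J * R) ^ j"
  proof (cases "j = 0")
    case True
    have "(\<Sum>y\<in>Y. \<Prod>s\<in>J1. P (y s)) = (\<Prod>s\<in>J1. \<Sum>z\<in>UNIV. P z)"
      unfolding Y_def using prod_sum_PiE[of J1 "\<lambda>_. UNIV" "\<lambda>s z. P z"] fJ1 by simp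
    then show ?thesis using True s1 by simp
  next
    case False
    then have j1: "j \<ge> 1" by simp
    have finA: "finite A" "A \<noteq> {}" unfolding A_def using fJ by (auto simp: PiE_eq_empty_iff intro!: finite_PiE)
    have cardA: "real (card A) = real CARD('a) ^ card J" unfolding A_def using fJ by (simp add: card_PiE)
    have "(\<Sum>y\<in>Y. (\<Prod>s\<in>J1. P (y s)) * (\<Sum>a\<in>A. P (comb a J y)) ^ j)
        \<le> (\<Sum>y\<in>Y. (\<Prod>s\<in>J1. P (y s)) * (real (card A) ^ (j - 1) * (\<Sum>a\<in>A. P (comb a J y) ^ j)))"
      by (rule sum_mono, rule mult_left_mono, rule power_mean_sum)
         (use finA nn j1 in \<open>auto simp: prod_nonneg\<close>)
    also have "\<dots> = real (card A) ^ (j - 1) * (\<Sum>a\<in>A. \<Sum>y\<in>Y. (\<Prod>s\<in>J1. P (y s)) * P (comb a J y) ^ j)"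
      by (simp add: sum_distrib_left algebra_simps sum.swap[of _ Y A])
    also have "\<dots> \<le> real (card A) ^ (j - 1) * (\<Sum>a\<in>A. \<Sum>z\<in>UNIV. P z ^ (j+1))"
      by (rule mult_left_mono, rule sum_mono)
         (use core_bound[OF fJ J0 nn s1] in \<open>auto simp: Y_def J1_def\<close>)
    also have "\<dots> = real (card A) ^ j * (\<Sum>z\<in>UNIV. P z ^ (j+1))"
      using j1 by (simp add: power_eq_if)
    also have "\<dots> \<le> real (card A) ^ j * R ^ j"
      by (rule mult_left_mono) (use R in \<open>auto simp: j_def\<close>)
    also have "\<dots> = (real CARD('a) ^ card J * R) ^ j" by (simp add: cardA power_mult_distrib)
    finally show ?thesis .
  qed
  finally show ?thesis unfolding Sx_def F_def j_def .
qed



lemma prod_indicator: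
  assumes "finite I"
  shows "(\<Prod>i\<in>I. if Q i then 1 else (0::real)) = (if \<forall>i\<in>I. Q i then 1 else 0)"
  using assms by (induction I rule: finite_induct) auto

lemma pmf_power_sum:
  fixes P :: "('a::{finite,field}^'n) pmf" and H :: "'a^'n^'m" and p :: nat
  assumes p: "p \<ge> 1"
  shows "(\<Sum>s\<in>UNIV. pmf (map_pmf (\<lambda>z. H *v z) P) s ^ p)
       = (\<Sum>x\<in>PiE {..<p} (\<lambda>_. UNIV). (\<Prod>i<p. pmf P (x i)) * (if \<forall>i<p. H *v (x i - x 0) = 0 then 1 else 0))"
proof -
  define h where "h = (\<lambda>z::'a^'n. H *v z)"
  define f where "f = (\<lambda>s z. pmf P z * (if h z = s then 1 else (0::real)))"
  have pm: "pmf (map_pmf h P) s = (\<Sum>z\<in>UNIV. f s z)" for s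
  proof -
    have "pmf (map_pmf h P) s = (\<Sum>z\<in>h -` {s}. pmf P z)"
      by (simp add: pmf_map measure_measure_pmf_finite)
    also have "\<dots> = (\<Sum>z\<in>UNIV. f s z)"
    proof -
      have "(\<Sum>z\<in>UNIV. f s z) = (\<Sum>z\<in>UNIV. if h z = s then pmf P z else 0)"
        unfolding f_def by (rule sum.cong) auto
      also have "\<dots> = sum (pmf P) {z. h z = s}" by (simp add: sum.If_cases)
      finally show ?thesis by (simp add: vimage_def)
    qed
    finally show ?thesis .
  qed
  have "(\<Sum>s\<in>UNIV. pmf (map_pmf h P) s ^ p) = (\<Sum>s\<in>UNIV. \<Prod>i<p. \<Sum>z\<in>UNIV. f s z)"
    by (simp add: pm)
  also have "\<dots> = (\<Sum>s\<in>UNIV. \<Sum>x\<in>PiE {..<p} (\<lambda>_. UNIV). \<Prod>i<p. f s (x i))"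
  proof (rule sum.cong)
    fix s
    show "(\<Prod>i<p. \<Sum>z\<in>UNIV. f s z) = (\<Sum>x\<in>PiE {..<p} (\<lambda>_. UNIV). \<Prod>i<p. f s (x i))"
      by (rule prod_sum_PiE) auto
  qed simp
  also have "\<dots> = (\<Sum>x\<in>PiE {..<p} (\<lambda>_. UNIV). \<Sum>s\<in>UNIV. \<Prod>i<p. f s (x i))"
    by (rule sum.swap)
  also have "\<dots> = (\<Sum>x\<in>PiE {..<p} (\<lambda>_. UNIV). (\<Prod>i<p. pmf P (x i)) * (if \<forall>i<p. H *v (x i - x 0) = 0 then 1 else 0))"
  proof (rule sum.cong)
    fix x :: "nat \<Rightarrow> 'a^'n"
    have "(\<Prod>i<p. f s (x i)) = (\<Prod>i<p. pmf P (x i)) * (if \<forall>i<p. h (x i) = s then 1 else 0)" for s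
      unfolding f_def prod.distrib using prod_indicator[of "{..<p}" "\<lambda>i. h (x i) = s"] by auto
    then have "(\<Sum>s\<in>UNIV. \<Prod>i<p. f s (x i)) = (\<Sum>s\<in>UNIV. (\<Prod>i<p. pmf P (x i)) * (if \<forall>i<p. h (x i) = s then 1 else 0))"
      by (intro sum.cong) (simp_all only:)
    also have "\<dots> = (\<Prod>i<p. pmf P (x i)) * (\<Sum>s\<in>UNIV. if \<forall>i<p. h (x i) = s then 1 else 0)"
      by (simp only: sum_distrib_left)
    also have "(\<Sum>s\<in>UNIV. if \<forall>i<p. h (x i) = s then 1 else (0::real)) = (if \<forall>i<p. h (x i) = h (x 0) then 1 else 0)"
    proof (cases "\<forall>i<p. h (x i) = h (x 0)")
      case True
      have iff: "(\<forall>i<p. h (x i) = s) \<longleftrightarrow> (s = h (x 0))" for s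
      proof
        assume a: "\<forall>i<p. h (x i) = s"
        have "0 < p" using p by simp
        then show "s = h (x 0)" using a by blast
      next
        assume "s = h (x 0)"
        then show "\<forall>i<p. h (x i) = s" using True by blast
      qed
      have "(\<Sum>s\<in>UNIV. if \<forall>i<p. h (x i) = s then 1 else (0::real)) = (\<Sum>s\<in>UNIV. if s = h (x 0) then 1 else 0)"
        by (simp only: iff)
      then show ?thesis by (simp only: sum.delta finite UNIV_I if_True if_P[OF True])
    next
      case False
      have nn: "\<not> (\<forall>i<p. h (x i) = s)" for s
      proof
        assume a: "\<forall>i<p. h (x i) = s"
        have "0 < p" using p by simp
        then have "s = h (x 0)" using a by blast
        then show False using a False by blast
      qed
      have "(\<Sum>s\<in>UNIV. if \<forall>i<p. h (x i) = s then 1 else (0::real)) = 0"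
        by (simp only: nn if_False sum.neutral_const)
      then show ?thesis using False by (simp only: if_False)
    qed
    also have "(\<forall>i<p. h (x i) = h (x 0)) \<longleftrightarrow> (\<forall>i<p. H *v (x i - x 0) = 0)"
      by (simp add: h_def matrix_vector_mult_diff_distrib)
    finally show "(\<Sum>s\<in>UNIV. \<Prod>i<p. f s (x i)) = (\<Prod>i<p. pmf P (x i)) * (if \<forall>i<p. H *v (x i - x 0) = 0 then 1 else 0)" .
  qed simp
  finally show ?thesis by (simp add: h_def)
qed

lemma tuple_prob:
  fixes x :: "nat \<Rightarrow> 'a::{finite,field}^'n"
  assumes kn: "k \<le> CARD('n)" and I: "I' \<subseteq> I" and fI: "finite I'"
  shows "real (card {C\<in>linear_codes k. \<forall>i\<in>I. x i - x 0 \<in> C})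
    \<le> real (card (linear_codes k :: ('a^'n) set set)) *
       (\<Sum>J\<in>Pow I'. if (\<forall>i\<in>I'-J. \<exists>c. x i - x 0 = (\<Sum>t\<in>J. c t *s (x t - x 0)))
                     then inverse (real CARD('a) ^ (CARD('n) - k)) ^ card J else 0)"
proof -
  define g where "g = (\<lambda>t. x t - x 0)"
  obtain B where B: "B \<subseteq> g ` I'" "vec.independent B" "g ` I' \<subseteq> vec.span B"
    using vec.maximal_independent_subset[of "g ` I'"] by blast
  have fB: "finite B" using B(2) vec.finiteI_independent by blast
  define J where "J = inv_into I' g ` B"
  have JI: "J \<subseteq> I'" unfolding J_def using B(1) by (auto intro: inv_into_into)
  have gJ: "g ` J = B" unfolding J_def using image_inv_into_cancel[OF refl B(1)] by blast
  have injinv: "inj_on (inv_into I' g) B" using B(1) by (rule inj_on_inv_into)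
  have cardJ: "card J = card B" unfolding J_def using card_image[OF injinv] .
  have fJ: "finite J" using JI fI finite_subset by blast
  have injg: "inj_on g J" using gJ cardJ fJ by (simp add: eq_card_imp_inj_on)
  have cond: "\<forall>i\<in>I'-J. \<exists>c. x i - x 0 = (\<Sum>t\<in>J. c t *s (x t - x 0))"
  proof
    fix i assume i: "i \<in> I' - J"
    then have "g i \<in> vec.span B" using B(3) by auto
    then obtain u where u: "g i = (\<Sum>v\<in>B. u v *s v)" using vec.span_finite[OF fB] by auto
    also have "\<dots> = (\<Sum>t\<in>J. u (g t) *s g t)"
      unfolding gJ[symmetric] by (rule sum.reindex[OF injg, unfolded o_def])
    finally show "\<exists>c. x i - x 0 = (\<Sum>t\<in>J. c t *s (x t - x 0))" unfolding g_def by (rule exI[of _ "\<lambda>t. u (x t - x 0)"])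
  qed
  define q where "q = CARD('a)"
  have q0: "real q > 0" unfolding q_def by simp
  have sub: "{C\<in>linear_codes k. \<forall>i\<in>I. x i - x 0 \<in> C} \<subseteq> {C\<in>linear_codes k. B \<subseteq> C}"
    using B(1) I unfolding g_def by auto
  have "card {C\<in>linear_codes k. \<forall>i\<in>I. x i - x 0 \<in> C} * q ^ ((CARD('n) - k) * card B)
        \<le> card {C\<in>linear_codes k. B \<subseteq> C} * q ^ ((CARD('n) - k) * card B)"
    using card_mono[OF _ sub] by simp
  also have "\<dots> \<le> card (linear_codes k :: ('a^'n) set set)" using codes_indep[OF B(2) kn] unfolding q_def .
  finally have "real (card {C\<in>linear_codes k. \<forall>i\<in>I. x i - x 0 \<in> C} * q ^ ((CARD('n) - k) * card B))
      \<le> real (card (linear_codes k :: ('a^'n) set set))" by (simp only: of_nat_le_iff)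
  then have "real (card {C\<in>linear_codes k. \<forall>i\<in>I. x i - x 0 \<in> C}) * real q ^ ((CARD('n) - k) * card B)
      \<le> real (card (linear_codes k :: ('a^'n) set set))" by (simp only: of_nat_mult of_nat_power)
  then have le1: "real (card {C\<in>linear_codes k. \<forall>i\<in>I. x i - x 0 \<in> C}) * (real q ^ (CARD('n) - k)) ^ card J
      \<le> real (card (linear_codes k :: ('a^'n) set set))" using cardJ by (simp only: power_mult)
  have Qp: "(real q ^ (CARD('n) - k)) ^ card J > 0" using q0 by simp
  have "real (card {C\<in>linear_codes k. \<forall>i\<in>I. x i - x 0 \<in> C})
      \<le> real (card (linear_codes k :: ('a^'n) set set)) / (real q ^ (CARD('n) - k)) ^ card J"
    using le1 Qp by (simp add: pos_le_divide_eq)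
  then have "real (card {C\<in>linear_codes k. \<forall>i\<in>I. x i - x 0 \<in> C})
      \<le> real (card (linear_codes k :: ('a^'n) set set)) * inverse (real q ^ (CARD('n) - k)) ^ card J"
    by (simp add: divide_inverse power_inverse)
  also have "\<dots> \<le> real (card (linear_codes k :: ('a^'n) set set)) *
       (\<Sum>J\<in>Pow I'. if (\<forall>i\<in>I'-J. \<exists>c. x i - x 0 = (\<Sum>t\<in>J. c t *s (x t - x 0)))
                     then inverse (real q ^ (CARD('n) - k)) ^ card J else 0)"
  proof (rule mult_left_mono)
    have "(if (\<forall>i\<in>I'-J. \<exists>c. x i - x 0 = (\<Sum>t\<in>J. c t *s (x t - x 0)))
            then inverse (real q ^ (CARD('n) - k)) ^ card J else 0)
       \<le> (\<Sum>J\<in>Pow I'. if (\<forall>i\<in>I'-J. \<exists>c. x i - x 0 = (\<Sum>t\<in>J. c t *s (x t - x 0)))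
                     then inverse (real q ^ (CARD('n) - k)) ^ card J else 0)"
      by (rule member_le_sum) (use JI fI q0 in auto)
    then show "inverse (real q ^ (CARD('n) - k)) ^ card J \<le> \<dots>" using cond by simp
  qed simp
  finally show ?thesis unfolding q_def .
qed



lemma powr_nat_nonneg: "(x::real) \<ge> 0 \<Longrightarrow> p > 0 \<Longrightarrow> x powr real p = x ^ p"
  by (cases "x = 0") (auto simp: powr_realpow)

lemma powr_inv_pow: "(M::real) \<ge> 0 \<Longrightarrow> p > 0 \<Longrightarrow> (M powr (1 / real p)) ^ p = M"
proof (cases "M = 0")
  case False
  assume "M \<ge> 0" "p > 0"
  then have M: "M > 0" using False by simp
  have "(M powr (1 / real p)) ^ p = (M powr (1 / real p)) powr real p"
    using M by (simp add: powr_realpow)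
  also have "\<dots> = M" using M \<open>p > 0\<close> by (simp add: powr_powr)
  finally show ?thesis .
qed simp

lemma bern_bound:
  fixes a N :: real
  assumes a: "a > 0" and N: "N \<ge> 0" and p: "p \<ge> 1"
  shows "N \<le> (N ^ p / a ^ (p - 1) + (real p - 1) * a) / real p"
proof -
  have t: "a ^ p + real p * a ^ (p - 1) * (N - a) \<le> N ^ p" by (rule tangent_pow[OF a N])
  have ap: "a ^ p = a * a ^ (p - 1)" using p by (cases p) auto
  have a1: "a ^ (p - 1) > 0" using a by simp
  have "real p * a ^ (p - 1) * N \<le> N ^ p + (real p - 1) * a * a ^ (p - 1)"
    using t unfolding ap by (simp add: algebra_simps)
  moreover have "(N ^ p / a ^ (p - 1) + (real p - 1) * a) * a ^ (p - 1) = N ^ p + (real p - 1) * a * a ^ (p - 1)"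
    using a1 a by (simp add: distrib_right)
  ultimately have "N * (real p * a ^ (p - 1)) \<le> (N ^ p / a ^ (p - 1) + (real p - 1) * a) * a ^ (p - 1)"
    by (simp add: mult_ac)
  then have "(N * real p) * a ^ (p - 1) \<le> (N ^ p / a ^ (p - 1) + (real p - 1) * a) * a ^ (p - 1)"
    by (simp add: mult_ac)
  then have "N * real p \<le> N ^ p / a ^ (p - 1) + (real p - 1) * a"
    using a1 by (simp only: mult_le_cancel_right_pos)
  then show ?thesis using p by (simp add: pos_le_divide_eq)
qed

lemma entropy_key:
  fixes P :: "('a::{finite,field}^'n) pmf" and \<epsilon> :: real and p m :: nat
  assumes e: "\<epsilon> > 0" and p: "p \<ge> 2"
    and H: "real m \<le> renyi_entropy (real CARD('a)) (real p) P - real p - log (real CARD('a)) (1 / \<epsilon>)"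
  shows "real CARD('a) ^ m * real CARD('a) ^ (p - 1) * (\<Sum>z\<in>UNIV. pmf P z ^ p) powr (1 / (real p - 1)) \<le> \<epsilon>"
proof -
  define q where "q = real CARD('a)"
  have q2: "q \<ge> 2" unfolding q_def using card_field_ge2[where 'a='a] by linarith
  define M0 where "M0 = (\<Sum>z\<in>UNIV. pmf P z ^ p)"
  have s1: "(\<Sum>z\<in>UNIV. pmf P z) = 1" by (rule sum_pmf_eq_1) auto
  have M0: "M0 > 0"
  proof -
    have "M0 \<ge> 0" unfolding M0_def by (simp add: sum_nonneg)
    moreover have "M0 \<noteq> 0"
    proof
      assume "M0 = 0"
      then have "\<forall>z\<in>UNIV. pmf P z ^ p = 0"
        using sum_nonneg_eq_0_iff[of UNIV "\<lambda>z. pmf P z ^ p"] unfolding M0_def by simp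
      then have "\<forall>z. pmf P z = 0" using p by simp
      then show False using s1 by simp
    qed
    ultimately show ?thesis by simp
  qed
  have Hs: "(\<Sum>z\<in>UNIV. pmf P z powr real p) = M0"
    unfolding M0_def using p by (intro sum.cong) (auto simp: powr_nat_nonneg)
  define Hr where "Hr = renyi_entropy q (real p) P"
  have Hr: "Hr = log q M0 / (1 - real p)" unfolding Hr_def renyi_entropy_def Hs by simp
  have p1: "real p - 1 > 0" using p by simp
  have R: "M0 powr (1 / (real p - 1)) = q powr (- Hr)"
  proof -
    have "M0 = q powr (log q M0)" using M0 q2 by simp
    then have "M0 powr (1 / (real p - 1)) = q powr (log q M0 * (1 / (real p - 1)))"
      by (metis powr_powr)
    also have "log q M0 * (1 / (real p - 1)) = - Hr" unfolding Hr using p1 by (simp add: field_simps)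
    finally show ?thesis .
  qed
  have qm: "q ^ m = q powr real m" using q2 by (simp add: powr_realpow)
  have qp: "q ^ (p - 1) = q powr (real p - 1)"
  proof -
    have "q powr real (p - 1) = q ^ (p - 1)" using q2 by (intro powr_realpow) simp
    moreover have "real (p - 1) = real p - 1" using p by (simp add: of_nat_diff)
    ultimately show ?thesis by simp
  qed
  have "q ^ m * q ^ (p - 1) * M0 powr (1 / (real p - 1)) = q powr (real m + (real p - 1) + - Hr)"
    unfolding qm qp R by (simp only: powr_add)
  also have "\<dots> \<le> q powr (-1 + log q \<epsilon>)"
  proof (rule powr_mono)
    have "log q (1 / \<epsilon>) = - log q \<epsilon>" using e q2 by (simp add: log_divide)
    then show "real m + (real p - 1) + - Hr \<le> -1 + log q \<epsilon>" using H unfolding Hr_def q_def by simp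
  qed (use q2 in simp)
  also have "\<dots> = \<epsilon> / q"
  proof -
    have "q powr (-1 + log q \<epsilon>) = q powr (-1) * q powr (log q \<epsilon>)" by (simp only: powr_add)
    also have "q powr (log q \<epsilon>) = \<epsilon>" using e q2 by simp
    also have "q powr (-1) = inverse q" using q2 by (simp add: powr_minus)
    finally show ?thesis by (simp add: divide_inverse mult.commute)
  qed
  also have "\<dots> \<le> \<epsilon>" using e q2 by (simp add: divide_le_eq)
  finally show ?thesis unfolding q_def M0_def .
qed



lemma real_card_filter: "finite A \<Longrightarrow> real (card {x\<in>A. P x}) = (\<Sum>x\<in>A. if P x then 1 else 0)"
  by (simp add: sum.If_cases Int_def)

lemma pmf_pow_sum_pos:
  fixes P :: "'v::finite pmf"
  assumes "p \<ge> 1"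
  shows "(\<Sum>z\<in>UNIV. pmf P z ^ p) > 0"
proof -
  have s1: "(\<Sum>z\<in>UNIV. pmf P z) = 1" by (rule sum_pmf_eq_1) auto
  have "(\<Sum>z\<in>UNIV. pmf P z ^ p) \<ge> 0" by (simp add: sum_nonneg)
  moreover have "(\<Sum>z\<in>UNIV. pmf P z ^ p) \<noteq> 0"
  proof
    assume "(\<Sum>z\<in>UNIV. pmf P z ^ p) = 0"
    then have "\<forall>z\<in>UNIV. pmf P z ^ p = 0"
      using sum_nonneg_eq_0_iff[of UNIV "\<lambda>z. pmf P z ^ p"] by simp
    then have "\<forall>z. pmf P z = 0" using assms by simp
    then show False using s1 by simp
  qed
  ultimately show ?thesis by simp
qed

lemma R_bound:
  fixes P :: "'v::finite pmf"
  assumes p: "p \<ge> 2" and K: "j + 1 \<le> p"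
  shows "(\<Sum>z\<in>UNIV. pmf P z ^ (j + 1)) \<le> ((\<Sum>z\<in>UNIV. pmf P z ^ p) powr (1 / (real p - 1))) ^ j"
proof -
  define M0 where "M0 = (\<Sum>z\<in>UNIV. pmf P z ^ p)"
  have M0: "M0 > 0" unfolding M0_def using pmf_pow_sum_pos[of p P] p by simp
  have "(\<Sum>z\<in>UNIV. pmf P z ^ (j + 1)) \<le> M0 powr ((real (j+1) - 1) / (real p - 1))"
    unfolding M0_def by (rule interp_pow) (use K sum_pmf_eq_1[of UNIV P] in auto)
  also have "\<dots> = (M0 powr (1 / (real p - 1))) ^ j"
  proof -
    have "(M0 powr (1 / (real p - 1))) ^ j = (M0 powr (1 / (real p - 1))) powr real j"
      using M0 by (simp add: powr_realpow)
    also have "\<dots> = M0 powr (real j / (real p - 1))" by (simp add: powr_powr)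
    finally show ?thesis by simp
  qed
  finally show ?thesis unfolding M0_def .
qed

lemma codes_sum_bound:
  fixes P :: "('a::{finite,field}^'n) pmf" and Hof :: "('a^'n) set \<Rightarrow> 'a^'n^'m"
    and \<epsilon> :: real and p :: nat
  assumes e: "\<epsilon> > 0" and p: "p \<ge> 2" and mn: "CARD('m) \<le> CARD('n)"
    and pc: "\<forall>C \<in> linear_codes (CARD('n) - CARD('m)). parity_check (Hof C) C"
    and key: "real CARD('a) ^ CARD('m) * real CARD('a) ^ (p - 1) * (\<Sum>z\<in>UNIV. pmf P z ^ p) powr (1 / (real p - 1)) \<le> \<epsilon>"
  shows "(\<Sum>C \<in> linear_codes (CARD('n) - CARD('m)).
            (real CARD('a) ^ CARD('m)) ^ (p - 1) * (\<Sum>s\<in>UNIV. pmf (map_pmf (\<lambda>z. Hof C *v z) P) s ^ p))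
         \<le> real (card (linear_codes (CARD('n) - CARD('m)) :: ('a^'n) set set)) * (1 + \<epsilon>) ^ p"
proof -
  define k where "k = CARD('n) - CARD('m)"
  define Cs where "Cs = (linear_codes k :: ('a^'n) set set)"
  define q where "q = real CARD('a)"
  define Qm where "Qm = q ^ CARD('m)"
  define R where "R = (\<Sum>z\<in>UNIV. pmf P z ^ p) powr (1 / (real p - 1))"
  define X where "X = PiE {..<p} (\<lambda>_. UNIV::('a^'n) set)"
  define F where "F = (\<lambda>x::nat \<Rightarrow> 'a^'n. \<Prod>i<p. pmf P (x i))"
  define I' where "I' = {1..<p}"
  define cond where "cond = (\<lambda>J (x::nat \<Rightarrow> 'a^'n). \<forall>i\<in>I'-J. \<exists>c. x i - x 0 = (\<Sum>t\<in>J. c t *s (x t - x 0)))"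
  define w where "w = (\<lambda>J::nat set. inverse (q ^ (CARD('n) - k)) ^ card J)"
  have nk: "CARD('n) - k = CARD('m)" using mn by (simp add: k_def)
  have kn: "k \<le> CARD('n)" by (simp add: k_def)
  have q1: "q \<ge> 1" unfolding q_def using card_field_ge2[where 'a='a] by linarith
  have Qm0: "Qm > 0" using q1 by (simp add: Qm_def)
  have R0: "R \<ge> 0" unfolding R_def by simp
  have Fnn: "F x \<ge> 0" for x unfolding F_def by (simp add: prod_nonneg)
  have finX: "finite X" unfolding X_def by (simp add: finite_PiE)
  have fI': "finite I'" by (simp add: I'_def)
  have step1: "(\<Sum>s\<in>UNIV. pmf (map_pmf (\<lambda>z. Hof C *v z) P) s ^ p)
      = (\<Sum>x\<in>X. F x * (if \<forall>i\<in>{..<p}. x i - x 0 \<in> C then 1 else 0))" if C: "C \<in> Cs" for C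
  proof -
    have ker: "Hof C *v v = 0 \<longleftrightarrow> v \<in> C" for v
      using pc C unfolding Cs_def k_def parity_check_def by blast
    have "(\<Sum>s\<in>UNIV. pmf (map_pmf (\<lambda>z. Hof C *v z) P) s ^ p)
       = (\<Sum>x\<in>PiE {..<p} (\<lambda>_. UNIV). (\<Prod>i<p. pmf P (x i)) * (if \<forall>i<p. Hof C *v (x i - x 0) = 0 then 1 else 0))"
      by (rule pmf_power_sum) (use p in simp)
    also have "\<dots> = (\<Sum>x\<in>X. F x * (if \<forall>i\<in>{..<p}. x i - x 0 \<in> C then 1 else 0))"
      by (simp add: ker X_def F_def Ball_def)
    finally show ?thesis .
  qed
  have "(\<Sum>C\<in>Cs. Qm ^ (p - 1) * (\<Sum>s\<in>UNIV. pmf (map_pmf (\<lambda>z. Hof C *v z) P) s ^ p))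
      = Qm ^ (p - 1) * (\<Sum>C\<in>Cs. \<Sum>x\<in>X. F x * (if \<forall>i\<in>{..<p}. x i - x 0 \<in> C then 1 else 0))"
    by (simp add: step1 sum_distrib_left)
  also have "(\<Sum>C\<in>Cs. \<Sum>x\<in>X. F x * (if \<forall>i\<in>{..<p}. x i - x 0 \<in> C then 1 else 0))
      = (\<Sum>x\<in>X. F x * real (card {C\<in>Cs. \<forall>i\<in>{..<p}. x i - x 0 \<in> C}))"
    by (subst sum.swap) (simp add: sum_distrib_left[symmetric] real_card_filter)
  also have "\<dots> \<le> (\<Sum>x\<in>X. F x * (real (card Cs) * (\<Sum>J\<in>Pow I'. if cond J x then w J else 0)))"
  proof (rule sum_mono, rule mult_left_mono)
    fix x :: "nat \<Rightarrow> 'a^'n"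
    show "real (card {C\<in>Cs. \<forall>i\<in>{..<p}. x i - x 0 \<in> C}) \<le> real (card Cs) * (\<Sum>J\<in>Pow I'. if cond J x then w J else 0)"
      unfolding Cs_def cond_def w_def q_def
      by (rule tuple_prob[OF kn]) (auto simp: I'_def)
  qed (rule Fnn)
  also have "\<dots> = real (card Cs) * (\<Sum>J\<in>Pow I'. w J * (\<Sum>x\<in>{x\<in>X. cond J x}. F x))"
  proof -
    have "(\<Sum>x\<in>X. F x * (real (card Cs) * (\<Sum>J\<in>Pow I'. if cond J x then w J else 0)))
        = real (card Cs) * (\<Sum>J\<in>Pow I'. \<Sum>x\<in>X. if cond J x then w J * F x else 0)"
      apply (subst sum.swap) apply (simp add: sum_distrib_left sum_distrib_right mult_ac if_distrib) by (intro sum.cong refl) (auto simp: mult_ac)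
    also have "(\<Sum>J\<in>Pow I'. \<Sum>x\<in>X. if cond J x then w J * F x else 0) = (\<Sum>J\<in>Pow I'. w J * (\<Sum>x\<in>{x\<in>X. cond J x}. F x))"
      by (rule sum.cong) (simp_all add: sum.inter_filter[OF finX] sum_distrib_left, (rule sum.cong; simp))
    finally show ?thesis .
  qed
  finally have A: "(\<Sum>C\<in>Cs. Qm ^ (p - 1) * (\<Sum>s\<in>UNIV. pmf (map_pmf (\<lambda>z. Hof C *v z) P) s ^ p))
      \<le> Qm ^ (p - 1) * (real (card Cs) * (\<Sum>J\<in>Pow I'. w J * (\<Sum>x\<in>{x\<in>X. cond J x}. F x)))"
    using Qm0 by (simp add: mult_left_mono)
  have B: "Qm ^ (p - 1) * (w J * (\<Sum>x\<in>{x\<in>X. cond J x}. F x)) \<le> \<epsilon> ^ card (I' - J)" if J: "J \<in> Pow I'" for J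
  proof -
    define K where "K = I' - J"
    have JI: "J \<subseteq> {1..<p}" using J by (simp add: I'_def)
    have cK: "card K + card J = p - 1" unfolding K_def I'_def using JI
      by (metis card_Diff_subset card_atLeastLessThan finite_atLeastLessThan finite_subset le_add_diff_inverse2 card_mono)
    have Rb: "(\<Sum>z\<in>UNIV. pmf P z ^ (card K + 1)) \<le> R ^ card K"
      unfolding R_def by (rule R_bound) (use p cK in auto)
    have S: "(\<Sum>x\<in>{x\<in>X. cond J x}. F x) \<le> (q ^ card J * R) ^ card K"
      unfolding X_def cond_def F_def q_def K_def[symmetric]
      by (rule SJ_bound[where P="pmf P"]) (use JI Rb p in \<open>auto simp: K_def I'_def sum_pmf_eq_1\<close>)
    have wJ: "Qm ^ (p - 1) * w J = Qm ^ card K"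
    proof -
      have "Qm ^ (p - 1) = Qm ^ card K * Qm ^ card J" using cK by (simp flip: power_add)
      moreover have "w J = inverse Qm ^ card J" by (simp add: w_def nk Qm_def)
      ultimately show ?thesis using Qm0 by (simp add: power_inverse)
    qed
    have "Qm ^ (p - 1) * (w J * (\<Sum>x\<in>{x\<in>X. cond J x}. F x)) = Qm ^ card K * (\<Sum>x\<in>{x\<in>X. cond J x}. F x)"
      using wJ by (simp add: mult.assoc[symmetric])
    also have "\<dots> \<le> Qm ^ card K * (q ^ card J * R) ^ card K"
      using S Qm0 by (simp add: mult_left_mono)
    also have "\<dots> = (Qm * q ^ card J * R) ^ card K" by (simp add: power_mult_distrib mult.assoc)
    also have "\<dots> \<le> \<epsilon> ^ card K"
    proof (rule power_mono)
      have "card J \<le> p - 1" using cK by simp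
      then have "q ^ card J \<le> q ^ (p - 1)" using q1 by (simp add: power_increasing)
      then have "Qm * q ^ card J * R \<le> Qm * q ^ (p - 1) * R"
        using Qm0 R0 by (simp add: mult_left_mono mult_right_mono)
      also have "\<dots> \<le> \<epsilon>" using key unfolding Qm_def q_def R_def .
      finally show "Qm * q ^ card J * R \<le> \<epsilon>" .
      show "0 \<le> Qm * q ^ card J * R" using Qm0 R0 q1 by simp
    qed
    finally show ?thesis unfolding K_def .
  qed
  have C: "(\<Sum>J\<in>Pow I'. \<epsilon> ^ card (I' - J)) = (1 + \<epsilon>) ^ (p - 1)"
  proof -
    have "(\<Prod>i\<in>I'. 1 + \<epsilon>) = (\<Sum>J\<in>Pow I'. (\<Prod>i\<in>J. 1) * (\<Prod>i\<in>I' - J. \<epsilon>))"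
      by (rule prod_add[OF fI'])
    then show ?thesis by (simp add: I'_def)
  qed
  have "Qm ^ (p - 1) * (real (card Cs) * (\<Sum>J\<in>Pow I'. w J * (\<Sum>x\<in>{x\<in>X. cond J x}. F x)))
      = real (card Cs) * (\<Sum>J\<in>Pow I'. Qm ^ (p - 1) * (w J * (\<Sum>x\<in>{x\<in>X. cond J x}. F x)))"
    by (simp add: sum_distrib_left mult_ac)
  also have "\<dots> \<le> real (card Cs) * (\<Sum>J\<in>Pow I'. \<epsilon> ^ card (I' - J))"
    by (rule mult_left_mono, rule sum_mono) (use B in auto)
  also have "\<dots> = real (card Cs) * (1 + \<epsilon>) ^ (p - 1)" using C by simp
  also have "\<dots> \<le> real (card Cs) * (1 + \<epsilon>) ^ p"
    using e by (intro mult_left_mono power_increasing) auto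
  finally show ?thesis using A unfolding Cs_def k_def Qm_def q_def by simp
qed



theorem theorem3p1:
  fixes P :: "('a::{finite,field} ^ 'n) pmf"
    and Hof :: "('a ^ 'n) set \<Rightarrow> 'a ^ 'n ^ 'm"
    and \<epsilon> :: real and p :: nat
  assumes "\<epsilon> > 0"
    and "p \<ge> 2"
    and "CARD('m) \<le> CARD('n)"
    and "\<forall>C \<in> linear_codes (CARD('n) - CARD('m)). parity_check (Hof C) C"
    and "real CARD('m) \<le> renyi_entropy (real CARD('a)) (real p) P - real p
                         - log (real CARD('a)) (1 / \<epsilon>)"
  shows "(\<Sum>C \<in> linear_codes (CARD('n) - CARD('m)).
            lp_smoothness (real p) (map_pmf (\<lambda>z. Hof C *v z) P))
         / real (card (linear_codes (CARD('n) - CARD('m)) :: ('a ^ 'n) set set)) \<le> \<epsilon>"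
proof -
  note e = assms(1) and p = assms(2)
  define Cs where "Cs = (linear_codes (CARD('n) - CARD('m)) :: ('a ^ 'n) set set)"
  define Qm where "Qm = real CARD('a) ^ CARD('m)"
  define a where "a = 1 + \<epsilon>"
  define MC where "MC = (\<lambda>C. Qm ^ (p - 1) * (\<Sum>s\<in>UNIV. pmf (map_pmf (\<lambda>z. Hof C *v z) P) s ^ p))"
  have a0: "a > 0" using e by (simp add: a_def)
  have Qm0: "Qm > 0" by (simp add: Qm_def)
  have p0: "p > 0" "real p > 0" using p by auto
  have key: "real CARD('a) ^ CARD('m) * real CARD('a) ^ (p - 1) * (\<Sum>z\<in>UNIV. pmf P z ^ p) powr (1 / (real p - 1)) \<le> \<epsilon>"
    by (rule entropy_key[OF e p assms(5)])
  have SB: "(\<Sum>C\<in>Cs. MC C) \<le> real (card Cs) * a ^ p"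
    unfolding MC_def Cs_def a_def Qm_def using codes_sum_bound[OF e p assms(3) assms(4) key] .
  have MC0: "MC C \<ge> 0" for C unfolding MC_def using Qm0 by (simp add: sum_nonneg)
  have lp: "lp_smoothness (real p) (map_pmf (\<lambda>z. Hof C *v z) P) = MC C powr (1 / real p) - 1" for C
  proof -
    define f where "f = map_pmf (\<lambda>z. Hof C *v z) P"
    have cm: "real CARD('a ^ 'm) = Qm" by (simp add: Qm_def)
    have "(1 / Qm) * (\<Sum>x\<in>UNIV. \<bar>Qm * pmf f x\<bar> powr real p) = (1 / Qm) * (\<Sum>x\<in>UNIV. Qm ^ p * pmf f x ^ p)"
      using Qm0 p0 by (simp add: powr_nat_nonneg power_mult_distrib)
    also have "\<dots> = MC C"
    proof -
      have "Qm ^ p = Qm * Qm ^ (p - 1)" using p0 by (cases p) auto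
      then show ?thesis unfolding MC_def f_def using Qm0 by (simp add: sum_distrib_left[symmetric])
    qed
    finally have "(1 / Qm) * (\<Sum>x\<in>UNIV. \<bar>Qm * pmf f x\<bar> powr real p) = MC C" .
    then show ?thesis unfolding lp_smoothness_def norm_p_def cm f_def by simp
  qed
  have each: "lp_smoothness (real p) (map_pmf (\<lambda>z. Hof C *v z) P)
      \<le> (MC C / a ^ (p - 1) + (real p - 1) * a) / real p - 1" for C
  proof -
    have "MC C powr (1 / real p) \<le> ((MC C powr (1 / real p)) ^ p / a ^ (p - 1) + (real p - 1) * a) / real p"
      by (rule bern_bound[OF a0]) (use p in auto)
    then show ?thesis unfolding lp powr_inv_pow[OF MC0 p0(1)] by simp
  qed
  have "(\<Sum>C\<in>Cs. lp_smoothness (real p) (map_pmf (\<lambda>z. Hof C *v z) P))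
      \<le> (\<Sum>C\<in>Cs. (MC C / a ^ (p - 1) + (real p - 1) * a) / real p - 1)"
    by (rule sum_mono) (rule each)
  also have "\<dots> = (\<Sum>C\<in>Cs. MC C) / (real p * a ^ (p - 1)) + real (card Cs) * ((real p - 1) * a / real p - 1)"
    by (simp add: sum_subtractf sum.distrib add_divide_distrib sum_divide_distrib[symmetric] divide_divide_eq_left mult.commute) (simp add: algebra_simps)
  also have "\<dots> \<le> real (card Cs) * a ^ p / (real p * a ^ (p - 1)) + real (card Cs) * ((real p - 1) * a / real p - 1)"
    using SB a0 p0 by (simp add: divide_right_mono)
  also have "\<dots> = real (card Cs) * \<epsilon>"
  proof -
    have "a ^ p = a * a ^ (p - 1)" using p0 by (cases p) auto
    then have "real (card Cs) * a ^ p / (real p * a ^ (p - 1)) = real (card Cs) * a / real p"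
      using a0 by (simp add: field_simps)
    then show ?thesis using p0 by (simp add: a_def field_simps)
  qed
  finally have T: "(\<Sum>C\<in>Cs. lp_smoothness (real p) (map_pmf (\<lambda>z. Hof C *v z) P)) \<le> real (card Cs) * \<epsilon>" .
  show ?thesis
  proof (cases "card Cs = 0")
    case True then show ?thesis using e by (simp add: Cs_def)
  next
    case False
    then have "real (card Cs) > 0" by linarith
    then show ?thesis using T unfolding Cs_def by (simp add: divide_le_eq mult.commute)
  qed
qed


end
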